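(* Let $K$ be a field, $S=K[x_1,\ldots,x_n]$, and let $I\subset S$ be a monomial ideal minimally generated by $q$ monomials $m_1,\ldots,m_q$. Label each vertex $\ell_{i,j}$ ($1\le i\le j\le q$) of the simplicial complex $\mathbb{M}_q^2$ by the monomial $m_im_j$. Then: (a) $\mathbb{M}_q^2$ supports a free resolution of $I^2$; (b) $\mathbb{M}^2(I)$ supports a free resolution of $I^2$.
   Context: Simplicial complexes: a simplicial complex on a vertex set is a collection of subsets closed under taking subsets; $\langle F_1,\ldots,F_r\rangle$ denotes the complex whose facets (maximal faces) are $F_1,\ldots,F_r$. Definition of $\mathbb{M}_q^2$: take the vertex set $V=\{\ell_{i,j}: 1\le i\le j\le q\}$, let $\mathcal{M}=\{\ell_{i,j}:1\le i<j\le q\}$ and $\mathcal{M}_i=\mathcal{M}\cup\{\ell_{i,i}\}$ for $i\in[q]$. Then $\mathbb{M}_q^2=\langle \mathcal{M}_1,\ldots,\mathcal{M}_q\rangle$. We write $\ell_{j,i}=\ell_{i,j}$. Definition of $\mathbb{M}^2(I)$: label each vertex $\ell_{i,j}$ of $\mathbb{M}_q^2$ with $m_im_j$. For any indices $i,j,u,v\in[q]$ with $\{i,j\}\ne\{u,v\}$ such that $m_im_j\mid m_um_v$: if $m_im_j=m_um_v$ and $i=\min\{i,j,u,v\}$, delete the vertex $\ell_{i,j}$; if $m_im_j\neq m_um_v$, delete the vertex $\ell_{u,v}$. $\mathbb{M}^2(I)$ is the induced subcomplex of $\mathbb{M}_q^2$ on the remaining vertices, with each face labeled by the lcm of the labels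 of its vertices. Supporting a free resolution: given a simplicial complex $\Delta$ whose vertices are labeled by monomials generating an ideal $J$, label each face $\tau$ by $m_\tau=\operatorname{lcm}$ of its vertex labels. $\Delta$ supports a free resolution of $J$ if the homogenization of the (augmented) simplicial chain complex of $\Delta$ with respect to these labels (in the sense of Bayer–Peeva–Sturmfels: the free module in homological degree $i$ has a basis indexed by the $i$-dimensional faces $\tau$, in multidegree $m_\tau$, with differential $\tau\mapsto\sum \pm (m_\tau/m_{\tau\setminus v})\,(\tau\setminus v)$) is a free resolution of $J$. *)

theory Defs
  imports Main "HOL-Library.Poly_Mapping" "HOL-Library.Product_Lexorder"
begin

text \<open>Monomials in x_1..x_n are exponent vectors (variable x_(i+1) has index i);
  polynomials over K are finitely supported maps from monomials to K.  The ring S = K[x_1..x_n] is the set of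
  polynomials all of whose monomials only involve the indices 0..n-1.\<close>

type_synonym mon = "nat \<Rightarrow>\<^sub>0 nat"
type_synonym 'k pol = "mon \<Rightarrow>\<^sub>0 'k"

definition mon_in :: "nat \<Rightarrow> mon \<Rightarrow> bool" where
  "mon_in n a \<longleftrightarrow> Poly_Mapping.keys a \<subseteq> {..<n}"

definition inS :: "nat \<Rightarrow> 'k::zero pol \<Rightarrow> bool" where
  "inS n p \<longleftrightarrow> (\<forall>a\<in>Poly_Mapping.keys p. mon_in n a)"

definition xmon :: "mon \<Rightarrow> 'k::{zero,one} pol" where
  "xmon a = Poly_Mapping.single a 1"

definition mdvd :: "mon \<Rightarrow> mon \<Rightarrow> bool" where
  "mdvd a b \<longleftrightarrow> (\<forall>i. Poly_Mapping.lookup a i \<le> Poly_Mapping.lookup b i)"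

definition mlcm :: "mon set \<Rightarrow> mon" where
  "mlcm A = Abs_poly_mapping (\<lambda>i. Max (insert 0 ((\<lambda>a. Poly_Mapping.lookup a i) ` A)))"

definition mdiff :: "mon \<Rightarrow> mon \<Rightarrow> mon" where
  "mdiff a b = Abs_poly_mapping (\<lambda>i. Poly_Mapping.lookup a i - Poly_Mapping.lookup b i)"

definition ideal_span :: "nat \<Rightarrow> 'k::comm_ring_1 pol set \<Rightarrow> 'k pol set" where
  "ideal_span n G = {p. \<exists>A c. finite A \<and> A \<subseteq> G \<and> (\<forall>g\<in>A. inS n (c g)) \<and> p = (\<Sum>g\<in>A. c g * g)}"

definition ideal_prod :: "nat \<Rightarrow> 'k::comm_ring_1 pol set \<Rightarrow> 'k pol set \<Rightarrow> 'k pol set" where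
  "ideal_prod n I J = ideal_span n {a * b | a b. a \<in> I \<and> b \<in> J}"

text \<open>A simplicial complex is a set of
  finite vertex sets (faces, the empty face included).  Faces with k vertices span the free
  module in homological degree k-1 (the empty face gives the copy of S in degree -1).
  A chain of size k is a function from faces of size k to S.  The vertex order of the type
  'v is used for the orientation signs.\<close>

definition face_label :: "('v \<Rightarrow> mon) \<Rightarrow> 'v set \<Rightarrow> mon" where
  "face_label lab \<tau> = mlcm (lab ` \<tau>)"

definition bsign :: "'v::linorder \<Rightarrow> 'v set \<Rightarrow> 'k::comm_ring_1" where
  "bsign v \<tau> = (-1) ^ card {w\<in>\<tau>. w < v}"

definition faces_card :: "'v set set \<Rightarrow> nat \<Rightarrow> 'v set set" where
  "faces_card \<Delta> k = {\<tau>\<in>\<Delta>. card \<tau> = k}"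

definition is_chain :: "'v set set \<Rightarrow> nat \<Rightarrow> nat \<Rightarrow> ('v set \<Rightarrow> 'k::zero pol) \<Rightarrow> bool" where
  "is_chain \<Delta> n k c \<longleftrightarrow> (\<forall>\<tau>. c \<tau> \<noteq> 0 \<longrightarrow> \<tau> \<in> faces_card \<Delta> k) \<and> (\<forall>\<tau>. inS n (c \<tau>))"

definition hbd :: "'v::linorder set set \<Rightarrow> ('v \<Rightarrow> mon) \<Rightarrow> nat \<Rightarrow> ('v set \<Rightarrow> 'k::comm_ring_1 pol)
                     \<Rightarrow> 'v set \<Rightarrow> 'k pol" where
  "hbd \<Delta> lab k c \<sigma> = (\<Sum>\<tau>\<in>faces_card \<Delta> k. \<Sum>v\<in>\<tau>.
       if \<tau> - {v} = \<sigma>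
       then bsign v \<tau> * xmon (mdiff (face_label lab \<tau>) (face_label lab \<sigma>)) * c \<tau>
       else 0)"

text \<open>\<Delta> with labels lab supports a free resolution of the ideal J of S = K[x_1..x_n]:
  the homogenized complex  ... \<rightarrow> F_1 \<rightarrow> F_0  is exact (in every homological degree \<ge> 0)
  and the image of F_0 \<rightarrow> S is J.\<close>
definition supports_free_resolution ::
  "nat \<Rightarrow> 'v::linorder set set \<Rightarrow> ('v \<Rightarrow> mon) \<Rightarrow> 'k::comm_ring_1 pol set \<Rightarrow> bool" where
  "supports_free_resolution n \<Delta> lab J \<longleftrightarrow>
     (\<forall>k\<ge>1. \<forall>c::'v set \<Rightarrow> 'k pol. is_chain \<Delta> n k c \<and> hbd \<Delta> lab k c = (\<lambda>_. 0) \<longrightarrow>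
         (\<exists>e. is_chain \<Delta> n (Suc k) e \<and> hbd \<Delta> lab (Suc k) e = c))
   \<and> {hbd \<Delta> lab 1 c {} | c. is_chain \<Delta> n 1 c} = J"

text \<open>The complex M_q^2: vertex l_{i,j} (1 \<le> i \<le> j \<le> q) is the pair (i,j).\<close>
definition lv :: "nat \<Rightarrow> nat \<Rightarrow> nat \<times> nat" where
  "lv i j = (min i j, max i j)"

definition Mset :: "nat \<Rightarrow> (nat \<times> nat) set" where
  "Mset q = {lv i j | i j. 1 \<le> i \<and> i < j \<and> j \<le> q}"

definition Mfacet :: "nat \<Rightarrow> nat \<Rightarrow> (nat \<times> nat) set" where
  "Mfacet q i = Mset q \<union> {lv i i}"

definition Mq2 :: "nat \<Rightarrow> (nat \<times> nat) set set" where
  "Mq2 q = {\<tau>. \<exists>i\<in>{1..q}. \<tau> \<subseteq> Mfacet q i}"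

definition Mlab :: "(nat \<Rightarrow> mon) \<Rightarrow> nat \<times> nat \<Rightarrow> mon" where
  "Mlab m v = m (fst v) + m (snd v)"

definition deleted :: "nat \<Rightarrow> (nat \<Rightarrow> mon) \<Rightarrow> (nat \<times> nat) set" where
  "deleted q m =
     {lv i j | i j u v. i \<in> {1..q} \<and> j \<in> {1..q} \<and> u \<in> {1..q} \<and> v \<in> {1..q} \<and> {i,j} \<noteq> {u,v}
        \<and> mdvd (m i + m j) (m u + m v) \<and> m i + m j = m u + m v \<and> i = Min {i,j,u,v}}
   \<union> {lv u v | i j u v. i \<in> {1..q} \<and> j \<in> {1..q} \<and> u \<in> {1..q} \<and> v \<in> {1..q} \<and> {i,j} \<noteq> {u,v}
        \<and> mdvd (m i + m j) (m u + m v) \<and> m i + m j \<noteq> m u + m v}"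

definition M2I :: "nat \<Rightarrow> (nat \<Rightarrow> mon) \<Rightarrow> (nat \<times> nat) set set" where
  "M2I q m = {\<tau> \<in> Mq2 q. \<tau> \<inter> deleted q m = {}}"

end

theory Submission imports Defs begin
abbreviation "lk \<equiv> Poly_Mapping.lookup"
abbreviation "kys \<equiv> Poly_Mapping.keys"

lemma lookup_xmon_mult:
  fixes p :: "'k::comm_ring_1 pol"
  shows "lk (xmon d * p) b = (if mdvd d b then lk p (b - d) else 0)"
proof -
  have "lk (xmon d * p) b = (\<Sum>l. lk (xmon d :: 'k pol) l * (\<Sum>q. lk p q when b = l + q))"
    by (rule lookup_mult)
  also have "\<dots> = (\<Sum>l. ((\<Sum>q. lk p q when b = l + q) when d = l))"
    unfolding xmon_def lookup_single by (simp add: when_mult)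
  also have "\<dots> = (\<Sum>q. lk p q when b = d + q)"
    by (simp add: when_def)
  also have "\<dots> = (if mdvd d b then lk p (b - d) else 0)"
  proof (cases "mdvd d b")
    case True
    have e: "b = d + q \<longleftrightarrow> q = b - d" for q
    proof
      assume "b = d + q" then show "q = b - d" by simp
    next
      assume "q = b - d"
      then show "b = d + q" using True
        by (intro poly_mapping_eqI) (simp add: lookup_add lookup_minus mdvd_def)
    qed
    show ?thesis using True by (simp add: e)
  next
    case False
    have "b \<noteq> d + q" for q
      using False by (auto simp: mdvd_def lookup_add)
    then show ?thesis using False by (simp add: when_def)
  qed
  finally show ?thesis .
qed


lemma mdvd_refl[simp]: "mdvd a a" by (simp add: mdvd_def)
lemma mdvd_trans: "mdvd a b \<Longrightarrow> mdvd b c \<Longrightarrow> mdvd a c"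
  unfolding mdvd_def using order_trans by blast
lemma mdvd_antisym: "mdvd a b \<Longrightarrow> mdvd b a \<Longrightarrow> a = b"
  unfolding mdvd_def by (intro poly_mapping_eqI) (simp add: order_antisym)
lemma mdvd_add_left[simp]: "mdvd a (a + b)"
  by (simp add: mdvd_def lookup_add)
lemma mdvd_add_right[simp]: "mdvd b (a + b)"
  by (simp add: mdvd_def lookup_add)
lemma mdvd_diff: "mdvd a b \<Longrightarrow> a + (b - a) = b"
  by (intro poly_mapping_eqI) (simp add: mdvd_def lookup_add lookup_minus)

lemma mdiff_eq: "mdiff a b = a - b"
proof -
  have "finite {i. lk a i - lk b i \<noteq> 0}"
    by (rule finite_subset[of _ "{i. lk a i \<noteq> 0}"]) auto
  then show ?thesis unfolding mdiff_def
    by (intro poly_mapping_eqI) (simp add: lookup_minus)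
qed

lemma lookup_mlcm:
  assumes "finite A"
  shows "lk (mlcm A) i = Max (insert 0 ((\<lambda>a. lk a i) ` A))"
proof -
  have "{i. Max (insert 0 ((\<lambda>a. lk a i) ` A)) \<noteq> 0} \<subseteq> (\<Union>a\<in>A. kys a)"
  proof
    fix i assume "i \<in> {i. Max (insert 0 ((\<lambda>a. lk a i) ` A)) \<noteq> 0}"
    then have ne: "Max (insert 0 ((\<lambda>a. lk a i) ` A)) \<noteq> 0" by simp
    have "Max (insert 0 ((\<lambda>a. lk a i) ` A)) \<in> insert 0 ((\<lambda>a. lk a i) ` A)"
      using assms by (intro Max_in) auto
    with ne obtain a where "a \<in> A" "lk a i \<noteq> 0" by auto
    then show "i \<in> (\<Union>a\<in>A. kys a)" by (auto simp: in_keys_iff)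
  qed
  moreover have "finite (\<Union>a\<in>A. kys a)" using assms by simp
  ultimately have "finite {i. Max (insert 0 ((\<lambda>a. lk a i) ` A)) \<noteq> 0}"
    by (rule finite_subset)
  then show ?thesis unfolding mlcm_def by simp
qed

lemma mdvd_face: "finite \<tau> \<Longrightarrow> v \<in> \<tau> \<Longrightarrow> mdvd (lab v) (face_label lab \<tau>)"
  unfolding face_label_def mdvd_def
  by (simp add: lookup_mlcm)

lemma face_dvd_iff: "finite \<tau> \<Longrightarrow> mdvd (face_label lab \<tau>) g \<longleftrightarrow> (\<forall>v\<in>\<tau>. mdvd (lab v) g)"
proof
  assume "finite \<tau>" "mdvd (face_label lab \<tau>) g"
  then show "\<forall>v\<in>\<tau>. mdvd (lab v) g" using mdvd_face[of \<tau> _ lab] mdvd_trans by metis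
next
  assume f: "finite \<tau>" and h: "\<forall>v\<in>\<tau>. mdvd (lab v) g"
  show "mdvd (face_label lab \<tau>) g"
    unfolding mdvd_def face_label_def
  proof
    fix i
    show "lk (mlcm (lab ` \<tau>)) i \<le> lk g i"
      using f h by (simp add: lookup_mlcm mdvd_def)
  qed
qed

lemma face_mono: "finite \<tau> \<Longrightarrow> \<sigma> \<subseteq> \<tau> \<Longrightarrow> mdvd (face_label lab \<sigma>) (face_label lab \<tau>)"
proof -
  assume a: "finite \<tau>" "\<sigma> \<subseteq> \<tau>"
  then have "finite \<sigma>" by (rule finite_subset[rotated])
  moreover have "\<forall>v\<in>\<sigma>. mdvd (lab v) (face_label lab \<tau>)" using a mdvd_face by (metis subsetD)
  ultimately show ?thesis by (simp add: face_dvd_iff)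
qed

lemma face_label_empty[simp]: "face_label lab {} = 0"
  unfolding face_label_def by (intro poly_mapping_eqI) (simp add: lookup_mlcm)

lemma face_label_single[simp]: "face_label lab {v} = lab v"
  unfolding face_label_def by (intro poly_mapping_eqI) (simp add: lookup_mlcm)

lemma lk_neg1pow: "lk ((-1::'k::comm_ring_1 pol)^n * p) b = (-1)^n * lk p b"
  by (induction n) auto

lemma lk_bsign: "lk ((bsign v \<tau> :: 'k::comm_ring_1 pol) * p) b = bsign v \<tau> * lk p b"
  unfolding bsign_def by (rule lk_neg1pow)

definition Zc :: "('v \<Rightarrow> mon) \<Rightarrow> ('v set \<Rightarrow> 'k::comm_ring_1 pol) \<Rightarrow> 'v set \<Rightarrow> mon \<Rightarrow> 'k" where
  "Zc lab c \<tau> g = (if mdvd (face_label lab \<tau>) g then lk (c \<tau>) (g - face_label lab \<tau>) else 0)"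

definition pbd :: "'v::linorder set set \<Rightarrow> nat \<Rightarrow> ('v set \<Rightarrow> 'k::comm_ring_1) \<Rightarrow> 'v set \<Rightarrow> 'k" where
  "pbd \<Delta> k z \<sigma> = (\<Sum>\<tau>\<in>faces_card \<Delta> k. \<Sum>v\<in>\<tau>. if \<tau> - {v} = \<sigma> then bsign v \<tau> * z \<tau> else 0)"

lemma lk_hbd:
  "lk (hbd \<Delta> lab k c \<sigma>) b = (\<Sum>\<tau>\<in>faces_card \<Delta> k. \<Sum>v\<in>\<tau>. if \<tau> - {v} = \<sigma> then
      bsign v \<tau> * lk (xmon (mdiff (face_label lab \<tau>) (face_label lab \<sigma>)) * c \<tau>) b else 0)"
  unfolding hbd_def lookup_sum
  by (intro sum.cong refl) (simp add: mult.assoc lk_bsign)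

lemma Zc_hbd:
  fixes c :: "'v::linorder set \<Rightarrow> 'k::comm_ring_1 pol"
  assumes fin: "\<forall>\<tau>\<in>\<Delta>. finite \<tau>"
  shows "Zc lab (hbd \<Delta> lab k c) \<sigma> g = pbd \<Delta> k (\<lambda>\<tau>. Zc lab c \<tau> g) \<sigma>"
proof (cases "mdvd (face_label lab \<sigma>) g")
  case False
  have "pbd \<Delta> k (\<lambda>\<tau>. Zc lab c \<tau> g) \<sigma> = 0"
    unfolding pbd_def
  proof (intro sum.neutral ballI)
    fix \<tau> v assume t: "\<tau> \<in> faces_card \<Delta> k" and v: "v \<in> \<tau>"
    show "(if \<tau> - {v} = \<sigma> then bsign v \<tau> * Zc lab c \<tau> g else 0) = 0"
    proof (cases "\<tau> - {v} = \<sigma>")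
      case True
      have "finite \<tau>" using t fin by (auto simp: faces_card_def)
      then have "mdvd (face_label lab \<sigma>) (face_label lab \<tau>)"
        using True by (intro face_mono) auto
      then have "\<not> mdvd (face_label lab \<tau>) g" using False mdvd_trans by blast
      then show ?thesis by (simp add: Zc_def)
    qed simp
  qed
  then show ?thesis using False by (simp add: Zc_def)
next
  case True
  have "Zc lab (hbd \<Delta> lab k c) \<sigma> g = lk (hbd \<Delta> lab k c \<sigma>) (g - face_label lab \<sigma>)"
    using True by (simp add: Zc_def)
  also have "\<dots> = (\<Sum>\<tau>\<in>faces_card \<Delta> k. \<Sum>v\<in>\<tau>. if \<tau> - {v} = \<sigma> then
      bsign v \<tau> * lk (xmon (mdiff (face_label lab \<tau>) (face_label lab \<sigma>)) * c \<tau>) (g - face_label lab \<sigma>) else 0)"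
    by (rule lk_hbd)
  also have "\<dots> = pbd \<Delta> k (\<lambda>\<tau>. Zc lab c \<tau> g) \<sigma>"
    unfolding pbd_def
  proof (intro sum.cong refl)
    fix \<tau> v assume t: "\<tau> \<in> faces_card \<Delta> k" and v: "v \<in> \<tau>"
    show "(if \<tau> - {v} = \<sigma> then bsign v \<tau> * lk (xmon (mdiff (face_label lab \<tau>) (face_label lab \<sigma>)) * c \<tau>) (g - face_label lab \<sigma>) else 0)
        = (if \<tau> - {v} = \<sigma> then bsign v \<tau> * Zc lab c \<tau> g else 0)"
    proof (cases "\<tau> - {v} = \<sigma>")
      case True2: True
      have "finite \<tau>" using t fin by (auto simp: faces_card_def)
      then have st: "mdvd (face_label lab \<sigma>) (face_label lab \<tau>)"
        using True2 by (intro face_mono) auto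
      have e1: "mdvd (face_label lab \<tau> - face_label lab \<sigma>) (g - face_label lab \<sigma>) \<longleftrightarrow> mdvd (face_label lab \<tau>) g"
        using st True unfolding mdvd_def by (simp add: lookup_minus) (meson diff_le_mono le_diff_iff order_trans)
      have e2: "g - face_label lab \<sigma> - (face_label lab \<tau> - face_label lab \<sigma>) = g - face_label lab \<tau>"
        if "mdvd (face_label lab \<tau>) g"
        using st True that unfolding mdvd_def by (intro poly_mapping_eqI) (auto simp: lookup_minus)
      show ?thesis using True2 e1 e2 by (simp add: lookup_xmon_mult mdiff_eq Zc_def)
    qed simp
  qed
  finally show ?thesis .
qed


definition bdv :: "'v::linorder set \<Rightarrow> ('v set \<Rightarrow> 'k::comm_ring_1) \<Rightarrow> 'v set \<Rightarrow> 'k" where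
  "bdv V z \<sigma> = (\<Sum>v\<in>V - \<sigma>. bsign v (insert v \<sigma>) * z (insert v \<sigma>))"

lemma pbd_bdv:
  fixes z :: "'v::linorder set \<Rightarrow> 'k::comm_ring_1"
  assumes finV: "finite V" and sub: "\<forall>\<tau>\<in>\<Delta>. \<tau> \<subseteq> V"
    and supp: "\<forall>\<tau>. z \<tau> \<noteq> 0 \<longrightarrow> \<tau> \<in> faces_card \<Delta> k"
  shows "pbd \<Delta> k z \<sigma> = bdv V z \<sigma>"
proof -
  have "\<Delta> \<subseteq> Pow V" using sub by blast
  moreover have "finite (Pow V)" using finV by simp
  ultimately have finD: "finite \<Delta>" by (rule finite_subset)
  have finF: "finite (faces_card \<Delta> k)" using finD by (simp add: faces_card_def)
  let ?h = "\<lambda>\<tau> v. if \<tau> - {v} = \<sigma> then bsign v \<tau> * z \<tau> else (0::'k)"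
  have "pbd \<Delta> k z \<sigma> = (\<Sum>\<tau>\<in>faces_card \<Delta> k. \<Sum>v\<in>V. if v \<in> \<tau> then ?h \<tau> v else 0)"
    unfolding pbd_def
  proof (rule sum.cong[OF refl])
    fix \<tau> assume "\<tau> \<in> faces_card \<Delta> k"
    then have "\<tau> \<subseteq> V" using sub by (auto simp: faces_card_def)
    then have "V \<inter> \<tau> = \<tau>" by blast
    then show "(\<Sum>v\<in>\<tau>. ?h \<tau> v) = (\<Sum>v\<in>V. if v \<in> \<tau> then ?h \<tau> v else 0)"
      using sum.inter_restrict[OF finV, of "?h \<tau>" \<tau>] by simp
  qed
  also have "\<dots> = (\<Sum>v\<in>V. \<Sum>\<tau>\<in>faces_card \<Delta> k. if v \<in> \<tau> then ?h \<tau> v else 0)"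
    by (rule sum.swap)
  also have "\<dots> = (\<Sum>v\<in>V. if v \<in> -\<sigma> then bsign v (insert v \<sigma>) * z (insert v \<sigma>) else 0)"
  proof (rule sum.cong[OF refl])
    fix v assume "v \<in> V"
    have "(\<Sum>\<tau>\<in>faces_card \<Delta> k. if v \<in> \<tau> then ?h \<tau> v else 0)
        = (\<Sum>\<tau>\<in>faces_card \<Delta> k. if \<tau> = insert v \<sigma> then (if v \<notin> \<sigma> then bsign v \<tau> * z \<tau> else 0) else 0)"
      by (intro sum.cong refl) auto
    also have "\<dots> = (if insert v \<sigma> \<in> faces_card \<Delta> k then (if v \<notin> \<sigma> then bsign v (insert v \<sigma>) * z (insert v \<sigma>) else 0) else 0)"
      using finF by (simp add: sum.delta)
    also have "\<dots> = (if v \<in> -\<sigma> then bsign v (insert v \<sigma>) * z (insert v \<sigma>) else 0)"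
    proof (cases "insert v \<sigma> \<in> faces_card \<Delta> k")
      case False
      then have "z (insert v \<sigma>) = 0" using supp by blast
      then show ?thesis using False by simp
    qed simp
    finally show "(\<Sum>\<tau>\<in>faces_card \<Delta> k. if v \<in> \<tau> then ?h \<tau> v else 0) = (if v \<in> -\<sigma> then bsign v (insert v \<sigma>) * z (insert v \<sigma>) else 0)" .
  qed
  also have "\<dots> = (\<Sum>v\<in>V \<inter> -\<sigma>. bsign v (insert v \<sigma>) * z (insert v \<sigma>))"
    by (simp only: sum.inter_restrict[OF finV])
  also have "V \<inter> -\<sigma> = V - \<sigma>" by blast
  finally show ?thesis unfolding bdv_def .
qed

lemma neg1pow_sq[simp]: "(-1::'k::comm_ring_1)^n * (-1)^n = 1"
  by (simp add: power_mult_distrib[symmetric])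

lemma bsign_sq[simp]: "(bsign v \<tau> :: 'k::comm_ring_1) * bsign v \<tau> = 1"
  unfolding bsign_def by simp

lemma bsign_swap:
  fixes a v :: "'v::linorder"
  assumes fin: "finite \<sigma>" and a: "a \<in> \<sigma>" and v: "v \<notin> \<sigma>"
  shows "(bsign v (insert v \<sigma>) :: 'k::comm_ring_1) * bsign a (insert v \<sigma>)
       = - (bsign a \<sigma> * bsign v (insert v (\<sigma> - {a})))"
proof -
  have va: "v \<noteq> a" using a v by auto
  have e1: "{w\<in>insert v \<sigma>. w < v} = {w\<in>\<sigma>. w < v}" by auto
  have e2: "{w\<in>insert v (\<sigma> - {a}). w < v} = {w\<in>\<sigma> - {a}. w < v}" by auto
  have f1: "finite {w\<in>\<sigma> - {a}. w < v}" "finite {w\<in>\<sigma>. w < a}" using fin by auto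
  show ?thesis
  proof (cases "a < v")
    case True
    have "{w\<in>\<sigma>. w < v} = insert a {w\<in>\<sigma> - {a}. w < v}" using True a by auto
    then have c1: "card {w\<in>\<sigma>. w < v} = Suc (card {w\<in>\<sigma> - {a}. w < v})"
      using f1 by simp
    have "{w\<in>insert v \<sigma>. w < a} = {w\<in>\<sigma>. w < a}" using True by auto
    then show ?thesis unfolding bsign_def using e1 e2 c1 by (simp add: algebra_simps)
  next
    case False
    then have lt: "v < a" using va by auto
    have "{w\<in>\<sigma>. w < v} = {w\<in>\<sigma> - {a}. w < v}" using lt by auto
    then have c1: "card {w\<in>\<sigma>. w < v} = card {w\<in>\<sigma> - {a}. w < v}" by simp
    have "{w\<in>insert v \<sigma>. w < a} = insert v {w\<in>\<sigma>. w < a}" using lt by auto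
    then have c2: "card {w\<in>insert v \<sigma>. w < a} = Suc (card {w\<in>\<sigma>. w < a})"
      using f1 v by simp
    show ?thesis unfolding bsign_def using e1 e2 c1 c2 by (simp add: algebra_simps)
  qed
qed

lemma cone_bdv:
  fixes z :: "'v::linorder set \<Rightarrow> 'k::comm_ring_1"
  assumes finV: "finite V" and aV: "a \<in> V" and zfin: "\<forall>\<sigma>. z \<sigma> \<noteq> 0 \<longrightarrow> finite \<sigma>"
    and cyc: "\<forall>\<sigma>. bdv V z \<sigma> = 0"
  shows "bdv V (\<lambda>\<tau>. if a \<in> \<tau> then bsign a \<tau> * z (\<tau> - {a}) else 0) \<sigma> = z \<sigma>"
proof (cases "a \<in> \<sigma>")
  case False
  have "bdv V (\<lambda>\<tau>. if a \<in> \<tau> then bsign a \<tau> * z (\<tau> - {a}) else 0) \<sigma>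
      = (\<Sum>v\<in>V - \<sigma>. if v = a then bsign a (insert a \<sigma>) * (bsign a (insert a \<sigma>) * z (insert a \<sigma> - {a})) else 0)"
    unfolding bdv_def using False by (intro sum.cong refl) auto
  also have "\<dots> = bsign a (insert a \<sigma>) * (bsign a (insert a \<sigma>) * z (insert a \<sigma> - {a}))"
    using finV aV False by (simp add: sum.delta)
  also have "\<dots> = z \<sigma>" using False by (simp add: mult.assoc[symmetric])
  finally show ?thesis .
next
  case True
  show ?thesis
  proof (cases "finite \<sigma>")
    case False
    then have "z \<sigma> = 0" using zfin by blast
    have zz: "z (insert v \<sigma> - {a}) = 0" for v
    proof -
      have "infinite (insert v \<sigma> - {a})" using False by simp
      then show ?thesis using zfin by blast
    qed
    have "(if a \<in> insert v \<sigma> then bsign a (insert v \<sigma>) * z (insert v \<sigma> - {a}) else 0) = (0::'k)" for v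
      by (simp only: zz mult_zero_right if_cancel)
    then show ?thesis unfolding bdv_def using \<open>z \<sigma> = 0\<close> by simp
  next
    case fin: True
    let ?s = "\<sigma> - {a}"
    have eqV: "V - ?s = insert a (V - \<sigma>)" using True aV by blast
    have naV: "a \<notin> V - \<sigma>" using True by blast
    have fV: "finite (V - \<sigma>)" using finV by simp
    have "bdv V z ?s = bsign a (insert a ?s) * z (insert a ?s) + (\<Sum>v\<in>V - \<sigma>. bsign v (insert v ?s) * z (insert v ?s))"
      unfolding bdv_def eqV by (rule sum.insert[OF fV naV])
    moreover have "insert a ?s = \<sigma>" using True by blast
    ultimately have S: "(\<Sum>v\<in>V - \<sigma>. bsign v (insert v ?s) * z (insert v ?s)) = - (bsign a \<sigma> * z \<sigma>)"
      using cyc by (metis add_eq_0_iff)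
    have "bdv V (\<lambda>\<tau>. if a \<in> \<tau> then bsign a \<tau> * z (\<tau> - {a}) else 0) \<sigma>
        = (\<Sum>v\<in>V - \<sigma>. - bsign a \<sigma> * (bsign v (insert v ?s) * z (insert v ?s)))"
      unfolding bdv_def
    proof (intro sum.cong refl)
      fix v assume v: "v \<in> V - \<sigma>"
      then have "insert v \<sigma> - {a} = insert v ?s" using True by blast
      moreover have "bsign v (insert v \<sigma>) * bsign a (insert v \<sigma>) = - (bsign a \<sigma> * (bsign v (insert v ?s) :: 'k))"
        using bsign_swap[OF fin True] v by blast
      ultimately show "bsign v (insert v \<sigma>) * (if a \<in> insert v \<sigma> then bsign a (insert v \<sigma>) * z (insert v \<sigma> - {a}) else 0)
          = - bsign a \<sigma> * (bsign v (insert v ?s) * z (insert v ?s))"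
        using True by (simp add: mult.assoc[symmetric])
    qed
    also have "\<dots> = - bsign a \<sigma> * (\<Sum>v\<in>V - \<sigma>. bsign v (insert v ?s) * z (insert v ?s))"
      by (simp add: sum_distrib_left)
    also have "\<dots> = z \<sigma>" using S by (simp add: mult.assoc[symmetric])
    finally show ?thesis .
  qed
qed


lemma mon_in_face:
  assumes "finite \<tau>" "\<forall>v\<in>\<tau>. mon_in n (lab v)"
  shows "mon_in n (face_label lab \<tau>)"
  unfolding mon_in_def
proof
  fix i assume "i \<in> kys (face_label lab \<tau>)"
  then have ne: "Max (insert 0 ((\<lambda>a. lk a i) ` (lab ` \<tau>))) \<noteq> 0"
    using assms(1) by (simp add: face_label_def lookup_mlcm in_keys_iff)
  have "Max (insert 0 ((\<lambda>a. lk a i) ` (lab ` \<tau>))) \<in> insert 0 ((\<lambda>a. lk a i) ` (lab ` \<tau>))"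
    using assms(1) by (intro Max_in) auto
  with ne obtain v where "v \<in> \<tau>" "lk (lab v) i \<noteq> 0" by auto
  then have "i \<in> kys (lab v)" by (simp add: in_keys_iff)
  then show "i \<in> {..<n}" using assms(2) \<open>v \<in> \<tau>\<close> unfolding mon_in_def by blast
qed

lemma mon_in_add_dest:
  assumes "mon_in n (b + c)" shows "mon_in n b"
  unfolding mon_in_def
proof
  fix i assume "i \<in> kys b"
  then have "lk (b + c) i \<noteq> 0" by (simp add: in_keys_iff lookup_add)
  then have "i \<in> kys (b + c)" by (simp add: in_keys_iff)
  then show "i \<in> {..<n}" using assms unfolding mon_in_def by blast
qed

lemma mon_in_add:
  assumes "mon_in n b" "mon_in n c" shows "mon_in n (b + c)"
  using assms keys_add[of b c] unfolding mon_in_def by blast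

lemma exact_generic:
  fixes \<Delta> :: "'v::linorder set set" and lab :: "'v \<Rightarrow> mon" and c :: "'v set \<Rightarrow> 'k::comm_ring_1 pol"
  assumes finV: "finite V" and sub: "\<forall>\<tau>\<in>\<Delta>. \<tau> \<subseteq> V"
    and labn: "\<forall>v\<in>V. mon_in n (lab v)"
    and apex: "\<forall>g \<tau>. \<tau> \<in> \<Delta> \<longrightarrow> \<tau> \<noteq> {} \<longrightarrow> mdvd (face_label lab \<tau>) g \<longrightarrow>
        (\<exists>a. \<forall>\<tau>'\<in>\<Delta>. mdvd (face_label lab \<tau>') g \<longrightarrow> insert a \<tau>' \<in> \<Delta> \<and> mdvd (face_label lab (insert a \<tau>')) g)"
    and k: "k \<ge> 1" and chain: "is_chain \<Delta> n k c" and cyc: "hbd \<Delta> lab k c = (\<lambda>_. 0)"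
  shows "\<exists>e. is_chain \<Delta> n (Suc k) e \<and> hbd \<Delta> lab (Suc k) e = c"
proof -
  have finT: "finite \<tau>" if "\<tau> \<in> \<Delta>" for \<tau>
  proof -
    have "\<tau> \<subseteq> V" using that sub by blast
    then show ?thesis using finV by (rule finite_subset)
  qed
  have finTall: "\<forall>\<tau>\<in>\<Delta>. finite \<tau>" using finT by blast
  have "\<Delta> \<subseteq> Pow V" using sub by blast
  moreover have "finite (Pow V)" using finV by simp
  ultimately have finD: "finite \<Delta>" by (rule finite_subset)
  define z where "z g \<tau> = Zc lab c \<tau> g" for g \<tau>
  have zsupp: "\<tau> \<in> faces_card \<Delta> k \<and> mdvd (face_label lab \<tau>) g" if "z g \<tau> \<noteq> 0" for g \<tau>
  proof -
    have "c \<tau> \<noteq> 0" using that by (auto simp: z_def Zc_def split: if_splits)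
    then have "\<tau> \<in> faces_card \<Delta> k" using chain by (simp add: is_chain_def)
    moreover have "mdvd (face_label lab \<tau>) g" using that by (auto simp: z_def Zc_def split: if_splits)
    ultimately show ?thesis by blast
  qed
  have zcyc: "bdv V (z g) \<sigma> = 0" for g \<sigma>
  proof -
    have "bdv V (z g) \<sigma> = pbd \<Delta> k (z g) \<sigma>"
    proof (rule pbd_bdv[OF finV sub, symmetric])
      show "\<forall>\<tau>. z g \<tau> \<noteq> 0 \<longrightarrow> \<tau> \<in> faces_card \<Delta> k" using zsupp by blast
    qed
    also have "\<dots> = Zc lab (hbd \<Delta> lab k c) \<sigma> g"
      unfolding z_def by (rule Zc_hbd[OF finTall, symmetric])
    also have "\<dots> = 0" using cyc by (simp add: Zc_def)
    finally show ?thesis .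
  qed
  define P where "P g a \<longleftrightarrow> (\<forall>\<tau>'\<in>\<Delta>. mdvd (face_label lab \<tau>') g \<longrightarrow> insert a \<tau>' \<in> \<Delta> \<and> mdvd (face_label lab (insert a \<tau>')) g)" for g a
  define apx where "apx g = (SOME a. P g a)" for g
  define good where "good g \<longleftrightarrow> (\<exists>\<tau>. z g \<tau> \<noteq> 0)" for g
  have apxP: "P g (apx g) \<and> apx g \<in> V" if gd0: "good g" for g
  proof -
    obtain \<tau>0 where t0: "z g \<tau>0 \<noteq> 0" using gd0 unfolding good_def by blast
    then have t0': "\<tau>0 \<in> \<Delta>" "card \<tau>0 = k" "mdvd (face_label lab \<tau>0) g"
      using zsupp[OF t0] by (auto simp: faces_card_def)
    then have "\<tau>0 \<noteq> {}" using k by auto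
    then have "\<exists>a. P g a" unfolding P_def by (rule apex[rule_format, OF t0'(1) _ t0'(3)])
    then have pa: "P g (apx g)" unfolding apx_def by (rule someI_ex)
    then have "insert (apx g) \<tau>0 \<in> \<Delta>" using t0' unfolding P_def by simp
    then have "apx g \<in> V" using sub by blast
    then show ?thesis using pa by blast
  qed
  define W where "W g \<tau> = (if good g \<and> apx g \<in> \<tau> then bsign (apx g) \<tau> * z g (\<tau> - {apx g}) else 0)" for g \<tau>
  have Wsupp: "\<tau> \<in> faces_card \<Delta> (Suc k) \<and> mdvd (face_label lab \<tau>) g \<and> good g" if "W g \<tau> \<noteq> 0" for g \<tau>
  proof -
    have gd: "good g" and a: "apx g \<in> \<tau>" and zz: "z g (\<tau> - {apx g}) \<noteq> 0"
      using that by (auto simp: W_def split: if_splits)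
    have s: "\<tau> - {apx g} \<in> \<Delta>" "card (\<tau> - {apx g}) = k" "mdvd (face_label lab (\<tau> - {apx g})) g"
      using zsupp[OF zz] by (auto simp: faces_card_def)
    have ins: "insert (apx g) (\<tau> - {apx g}) = \<tau>" using a by blast
    have "insert (apx g) (\<tau> - {apx g}) \<in> \<Delta> \<and> mdvd (face_label lab (insert (apx g) (\<tau> - {apx g}))) g"
      using apxP[OF gd, THEN conjunct1, unfolded P_def, rule_format, OF s(1) s(3)] .
    then have t: "\<tau> \<in> \<Delta>" "mdvd (face_label lab \<tau>) g" using ins by auto
    have "card \<tau> = Suc k"
    proof -
      have "finite (\<tau> - {apx g})" using finT[OF s(1)] .
      then have "card (insert (apx g) (\<tau> - {apx g})) = Suc (card (\<tau> - {apx g}))"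
        by (rule card_insert_disjoint) simp
      then show ?thesis using ins s(2) by simp
    qed
    then show ?thesis using t gd by (simp add: faces_card_def)
  qed
  have Wbd: "bdv V (W g) \<sigma> = z g \<sigma>" for g \<sigma>
  proof (cases "good g")
    case True
    have zf: "\<forall>\<sigma>. z g \<sigma> \<noteq> 0 \<longrightarrow> finite \<sigma>" using zsupp finT by (auto simp: faces_card_def)
    have "W g = (\<lambda>\<tau>. if apx g \<in> \<tau> then bsign (apx g) \<tau> * z g (\<tau> - {apx g}) else 0)"
      using True by (simp add: W_def fun_eq_iff)
    then show ?thesis using cone_bdv[OF finV conjunct2[OF apxP[OF True]] zf] zcyc by simp
  next
    case False
    then have "z g \<sigma> = 0" "W g = (\<lambda>_. 0)" by (auto simp: good_def W_def fun_eq_iff)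
    then show ?thesis by (simp add: bdv_def)
  qed
  define G where "G = (\<Union>\<tau>'\<in>\<Delta>. (\<lambda>\<beta>. \<beta> + face_label lab \<tau>') ` kys (c \<tau>'))"
  have finG: "finite G" unfolding G_def using finD by auto
  have goodG: "g \<in> G" if gd0: "good g" for g
  proof -
    obtain \<tau>' where t: "z g \<tau>' \<noteq> 0" using gd0 unfolding good_def by blast
    then have "\<tau>' \<in> \<Delta>" "mdvd (face_label lab \<tau>') g" using zsupp by (auto simp: faces_card_def)
    moreover have "lk (c \<tau>') (g - face_label lab \<tau>') \<noteq> 0" using t by (auto simp: z_def Zc_def split: if_splits)
    moreover have "g = (g - face_label lab \<tau>') + face_label lab \<tau>'"
      using mdvd_diff[OF \<open>mdvd (face_label lab \<tau>') g\<close>] by (simp add: add.commute)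
    ultimately have "\<tau>' \<in> \<Delta>" "g - face_label lab \<tau>' \<in> kys (c \<tau>')" "g = (g - face_label lab \<tau>') + face_label lab \<tau>'"
      by (auto simp: in_keys_iff)
    then have "g \<in> (\<lambda>\<beta>. \<beta> + face_label lab \<tau>') ` kys (c \<tau>')" by (intro image_eqI)
    then show ?thesis unfolding G_def using \<open>\<tau>' \<in> \<Delta>\<close> by (rule UN_I[rotated])
  qed
  define e where "e \<tau> = Abs_poly_mapping (\<lambda>\<alpha>. W (\<alpha> + face_label lab \<tau>) \<tau>)" for \<tau>
  have lke: "lk (e \<tau>) = (\<lambda>\<alpha>. W (\<alpha> + face_label lab \<tau>) \<tau>)" for \<tau>
  proof -
    have "{\<alpha>. W (\<alpha> + face_label lab \<tau>) \<tau> \<noteq> 0} \<subseteq> (\<lambda>\<alpha>. \<alpha> + face_label lab \<tau>) -` G"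
      using Wsupp goodG by blast
    moreover have "finite ((\<lambda>\<alpha>. \<alpha> + face_label lab \<tau>) -` G)"
      using finG by (intro finite_vimageI) (auto simp: inj_on_def)
    ultimately have "finite {\<alpha>. W (\<alpha> + face_label lab \<tau>) \<tau> \<noteq> 0}" by (rule finite_subset)
    then show ?thesis unfolding e_def by simp
  qed
  have Ze: "Zc lab e \<tau> g = W g \<tau>" for \<tau> g
  proof (cases "mdvd (face_label lab \<tau>) g")
    case True
    then show ?thesis by (simp add: Zc_def lke mdvd_diff add.commute)
  next
    case False
    then show ?thesis using Wsupp by (auto simp: Zc_def)
  qed
  have hbde: "hbd \<Delta> lab (Suc k) e = c"
  proof
    fix \<sigma>
    show "hbd \<Delta> lab (Suc k) e \<sigma> = c \<sigma>"
    proof (rule poly_mapping_eqI)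
      fix \<alpha>
      let ?g = "\<alpha> + face_label lab \<sigma>"
      have dv: "mdvd (face_label lab \<sigma>) ?g" by simp
      have "lk (hbd \<Delta> lab (Suc k) e \<sigma>) \<alpha> = Zc lab (hbd \<Delta> lab (Suc k) e) \<sigma> ?g"
        using dv by (simp add: Zc_def)
      also have "\<dots> = pbd \<Delta> (Suc k) (\<lambda>\<tau>. Zc lab e \<tau> ?g) \<sigma>"
        by (rule Zc_hbd[OF finTall])
      also have "\<dots> = pbd \<Delta> (Suc k) (W ?g) \<sigma>"
        by (simp add: Ze)
      also have "\<dots> = bdv V (W ?g) \<sigma>"
      proof (rule pbd_bdv[OF finV sub])
        show "\<forall>\<tau>. W ?g \<tau> \<noteq> 0 \<longrightarrow> \<tau> \<in> faces_card \<Delta> (Suc k)" using Wsupp by blast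
      qed
      also have "\<dots> = z ?g \<sigma>" by (rule Wbd)
      also have "\<dots> = lk (c \<sigma>) \<alpha>" using dv by (simp add: z_def Zc_def)
      finally show "lk (hbd \<Delta> lab (Suc k) e \<sigma>) \<alpha> = lk (c \<sigma>) \<alpha>" .
    qed
  qed
  have che: "is_chain \<Delta> n (Suc k) e"
    unfolding is_chain_def
  proof (intro conjI allI impI)
    fix \<tau> assume "e \<tau> \<noteq> 0"
    then obtain \<alpha> where "lk (e \<tau>) \<alpha> \<noteq> 0" using poly_mapping_eqI[of "e \<tau>" 0] by auto
    then show "\<tau> \<in> faces_card \<Delta> (Suc k)" using Wsupp by (auto simp: lke)
  next
    fix \<tau>
    show "inS n (e \<tau>)" unfolding inS_def
    proof
      fix \<alpha> assume "\<alpha> \<in> kys (e \<tau>)"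
      then have "W (\<alpha> + face_label lab \<tau>) \<tau> \<noteq> 0" by (simp add: lke in_keys_iff)
      then have "\<alpha> + face_label lab \<tau> \<in> G" using Wsupp goodG by blast
      then obtain \<tau>' \<beta> where t: "\<tau>' \<in> \<Delta>" "\<beta> \<in> kys (c \<tau>')" "\<alpha> + face_label lab \<tau> = \<beta> + face_label lab \<tau>'"
        unfolding G_def by blast
      have "mon_in n \<beta>" using chain t(2) by (auto simp: is_chain_def inS_def)
      moreover have "mon_in n (face_label lab \<tau>')"
        using t(1) finT sub labn by (intro mon_in_face) blast+
      ultimately have "mon_in n (\<alpha> + face_label lab \<tau>)" using t(3) mon_in_add by metis
      then show "mon_in n \<alpha>" by (rule mon_in_add_dest)
    qed
  qed
  show ?thesis using che hbde by blast
qed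


lemma hbd1_empty:
  fixes c :: "'v::linorder set \<Rightarrow> 'k::comm_ring_1 pol"
  shows "hbd \<Delta> lab 1 c {} = (\<Sum>\<tau>\<in>faces_card \<Delta> 1. xmon (face_label lab \<tau>) * c \<tau>)"
  unfolding hbd_def
proof (rule sum.cong[OF refl])
  fix \<tau> assume "\<tau> \<in> faces_card \<Delta> 1"
  then have "card \<tau> = 1" by (simp add: faces_card_def)
  then obtain u where u: "\<tau> = {u}" by (rule card_1_singletonE)
  have "mdiff (lab u) 0 = lab u" by (simp add: mdiff_eq)
  moreover have "(bsign u {u} :: 'k pol) = 1"
  proof -
    have e: "{w\<in>{u}. w < u} = {}" by auto
    show ?thesis by (simp only: bsign_def e card.empty power_0)
  qed
  ultimately show "(\<Sum>v\<in>\<tau>. if \<tau> - {v} = {} then bsign v \<tau> * xmon (mdiff (face_label lab \<tau>) (face_label lab {})) * c \<tau> else 0)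
      = xmon (face_label lab \<tau>) * c \<tau>" using u by simp
qed

lemma inS_0[simp]: "inS n 0" by (simp add: inS_def)

lemma inS_add: "inS n p \<Longrightarrow> inS n q \<Longrightarrow> inS n (p + q)"
  unfolding inS_def using keys_add[of p q] by blast

lemma inS_mult: "inS n p \<Longrightarrow> inS n q \<Longrightarrow> inS n (p * q)"
  unfolding inS_def
proof
  fix a assume p: "\<forall>a\<in>kys p. mon_in n a" and q: "\<forall>a\<in>kys q. mon_in n a" and a: "a \<in> kys (p * q)"
  then obtain b c where "a = b + c" "b \<in> kys p" "c \<in> kys q" using keys_mult[of p q] by blast
  then show "mon_in n a" using p q mon_in_add by blast
qed

lemma inS_xmon: "mon_in n a \<Longrightarrow> inS n (xmon a :: 'k::{zero_neq_one} pol)"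
  unfolding inS_def xmon_def by simp

lemma mon_in_0[simp]: "mon_in n 0" by (simp add: mon_in_def)

lemma inS_1: "inS n (1 :: 'k::comm_ring_1 pol)"
  unfolding inS_def by simp

lemma xmon_mult: "(xmon a :: 'k::comm_ring_1 pol) * xmon b = xmon (a + b)"
  unfolding xmon_def by (simp add: mult_single)

lemma sum_closed:
  assumes "finite A" "0 \<in> M" "\<And>x y. x \<in> M \<Longrightarrow> y \<in> M \<Longrightarrow> x + y \<in> M" "\<forall>x\<in>A. f x \<in> M"
  shows "sum f A \<in> M"
  using assms(1,4)
proof (induction A rule: finite_induct)
  case empty then show ?case using assms(2) by simp
next
  case (insert x F) then show ?case using assms(3) by simp
qed

lemma span_0: "0 \<in> ideal_span n G"
  unfolding ideal_span_def by (rule CollectI, rule exI[of _ "{}"]) simp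

lemma span_gen: "g \<in> G \<Longrightarrow> g \<in> ideal_span n (G :: 'k::comm_ring_1 pol set)"
  unfolding ideal_span_def
  by (rule CollectI, rule exI[of _ "{g}"], rule exI[of _ "\<lambda>_. 1"]) (simp add: inS_1)

lemma span_add:
  assumes "p \<in> ideal_span n G" "q \<in> ideal_span n G"
  shows "p + q \<in> ideal_span n (G :: 'k::comm_ring_1 pol set)"
proof -
  obtain A1 c1 where 1: "finite A1" "A1 \<subseteq> G" "\<forall>g\<in>A1. inS n (c1 g)" "p = (\<Sum>g\<in>A1. c1 g * g)"
    using assms(1) unfolding ideal_span_def by blast
  obtain A2 c2 where 2: "finite A2" "A2 \<subseteq> G" "\<forall>g\<in>A2. inS n (c2 g)" "q = (\<Sum>g\<in>A2. c2 g * g)"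
    using assms(2) unfolding ideal_span_def by blast
  define c where "c g = (if g \<in> A1 then c1 g else 0) + (if g \<in> A2 then c2 g else 0)" for g
  have fin: "finite (A1 \<union> A2)" using 1 2 by simp
  have "(\<Sum>g\<in>A1 \<union> A2. c g * g) = (\<Sum>g\<in>A1 \<union> A2. if g \<in> A1 then c1 g * g else 0) + (\<Sum>g\<in>A1 \<union> A2. if g \<in> A2 then c2 g * g else 0)"
  proof -
    have "c g * g = (if g \<in> A1 then c1 g * g else 0) + (if g \<in> A2 then c2 g * g else 0)" for g
      unfolding c_def by (simp add: distrib_right)
    then show ?thesis by (simp add: sum.distrib)
  qed
  also have "\<dots> = (\<Sum>g\<in>(A1 \<union> A2) \<inter> A1. c1 g * g) + (\<Sum>g\<in>(A1 \<union> A2) \<inter> A2. c2 g * g)"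
    by (simp only: sum.inter_restrict[OF fin])
  also have "(A1 \<union> A2) \<inter> A1 = A1" by blast
  also have "(A1 \<union> A2) \<inter> A2 = A2" by blast
  finally have "p + q = (\<Sum>g\<in>A1 \<union> A2. c g * g)" using 1 2 by simp
  moreover have "\<forall>g\<in>A1 \<union> A2. inS n (c g)" unfolding c_def using 1 2 by (auto intro!: inS_add)
  moreover have "A1 \<union> A2 \<subseteq> G" using 1 2 by simp
  ultimately show ?thesis unfolding ideal_span_def using fin
    by (intro CollectI exI[of _ "A1 \<union> A2"] exI[of _ c] conjI) simp_all
qed

lemma span_smult:
  assumes "inS n s" "p \<in> ideal_span n G"
  shows "s * p \<in> ideal_span n (G :: 'k::comm_ring_1 pol set)"
proof -
  obtain A c where 1: "finite A" "A \<subseteq> G" "\<forall>g\<in>A. inS n (c g)" "p = (\<Sum>g\<in>A. c g * g)"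
    using assms(2) unfolding ideal_span_def by blast
  have "s * p = (\<Sum>g\<in>A. (s * c g) * g)" using 1 by (simp add: sum_distrib_left mult.assoc)
  moreover have "\<forall>g\<in>A. inS n (s * c g)" using 1 assms(1) by (auto intro: inS_mult)
  ultimately show ?thesis unfolding ideal_span_def using 1
    by (intro CollectI exI[of _ A] exI[of _ "\<lambda>g. s * c g"] conjI) simp_all
qed

lemma span_least:
  assumes "0 \<in> M" "\<And>x y. x \<in> M \<Longrightarrow> y \<in> M \<Longrightarrow> x + y \<in> M"
    "\<And>s x. inS n s \<Longrightarrow> x \<in> M \<Longrightarrow> s * x \<in> M" "G \<subseteq> M"
  shows "ideal_span n (G :: 'k::comm_ring_1 pol set) \<subseteq> M"
proof
  fix p assume "p \<in> ideal_span n G"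
  then obtain A c where 1: "finite A" "A \<subseteq> G" "\<forall>g\<in>A. inS n (c g)" "p = (\<Sum>g\<in>A. c g * g)"
    unfolding ideal_span_def by blast
  have "\<forall>g\<in>A. c g * g \<in> M" using 1 assms(3,4) by blast
  then show "p \<in> M" using 1 sum_closed[OF 1(1) assms(1,2)] by simp
qed

lemma image_generic:
  fixes \<Delta> :: "'v::linorder set set" and lab :: "'v \<Rightarrow> mon" and m :: "nat \<Rightarrow> mon"
  assumes finD: "finite \<Delta>"
    and V1: "\<forall>\<tau>\<in>faces_card \<Delta> 1. \<exists>a\<in>{1..q}. \<exists>b\<in>{1..q}. face_label lab \<tau> = m a + m b"
    and V2: "\<forall>a\<in>{1..q}. \<forall>b\<in>{1..q}. \<exists>u. {u} \<in> \<Delta> \<and> mdvd (lab u) (m a + m b)"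
    and V3: "\<forall>i\<in>{1..q}. mon_in n (m i)"
    and I_def: "I = ideal_span n ((\<lambda>i. xmon (m i) :: 'k::comm_ring_1 pol) ` {1..q})"
  shows "{hbd \<Delta> lab 1 c {} | c. is_chain \<Delta> n 1 c} = ideal_prod n I I"
proof -
  define R where "R = {(\<Sum>\<tau>\<in>faces_card \<Delta> 1. xmon (face_label lab \<tau>) * c \<tau>) | c :: 'v set \<Rightarrow> 'k pol. is_chain \<Delta> n 1 c}"
  have LR: "{hbd \<Delta> lab 1 c {} | c. is_chain \<Delta> n 1 c} = R"
    unfolding R_def hbd1_empty ..
  have finF: "finite (faces_card \<Delta> 1)" using finD by (simp add: faces_card_def)
  have genI: "xmon (m a) \<in> I" if "a \<in> {1..q}" for a
    unfolding I_def using that by (intro span_gen) blast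
  have sub1: "R \<subseteq> ideal_prod n I I"
  proof
    fix p assume "p \<in> R"
    then obtain c where c: "is_chain \<Delta> n 1 c" "p = (\<Sum>\<tau>\<in>faces_card \<Delta> 1. xmon (face_label lab \<tau>) * c \<tau>)"
      unfolding R_def by blast
    have "\<forall>\<tau>\<in>faces_card \<Delta> 1. xmon (face_label lab \<tau>) * c \<tau> \<in> ideal_prod n I I"
    proof
      fix \<tau> assume "\<tau> \<in> faces_card \<Delta> 1"
      then obtain a b where ab: "a \<in> {1..q}" "b \<in> {1..q}" "face_label lab \<tau> = m a + m b" using V1 by blast
      have "xmon (m a) * xmon (m b) \<in> {x * y | x y. x \<in> I \<and> y \<in> I}" using genI ab by blast
      then have "xmon (face_label lab \<tau>) \<in> ideal_prod n I I"
        unfolding ideal_prod_def using ab by (simp add: xmon_mult span_gen)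
      then have "c \<tau> * xmon (face_label lab \<tau>) \<in> ideal_prod n I I"
        unfolding ideal_prod_def using c(1) by (intro span_smult) (auto simp: is_chain_def)
      then show "xmon (face_label lab \<tau>) * c \<tau> \<in> ideal_prod n I I" by (simp add: mult.commute)
    qed
    then show "p \<in> ideal_prod n I I" unfolding c(2) ideal_prod_def
      by (intro sum_closed[OF finF span_0 span_add]) auto
  qed
  have R0: "0 \<in> R"
  proof -
    have "is_chain \<Delta> n 1 (\<lambda>_. 0 :: 'k pol)" by (simp add: is_chain_def)
    then show ?thesis unfolding R_def by force
  qed
  have Radd: "x + y \<in> R" if xy: "x \<in> R" "y \<in> R" for x y
  proof -
    obtain c1 where c1: "is_chain \<Delta> n 1 c1" "x = (\<Sum>\<tau>\<in>faces_card \<Delta> 1. xmon (face_label lab \<tau>) * c1 \<tau>)"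
      using xy(1) unfolding R_def by blast
    obtain c2 where c2: "is_chain \<Delta> n 1 c2" "y = (\<Sum>\<tau>\<in>faces_card \<Delta> 1. xmon (face_label lab \<tau>) * c2 \<tau>)"
      using xy(2) unfolding R_def by blast
    have "is_chain \<Delta> n 1 (\<lambda>\<tau>. c1 \<tau> + c2 \<tau>)" unfolding is_chain_def
    proof (intro conjI allI impI)
      fix \<tau> assume "c1 \<tau> + c2 \<tau> \<noteq> 0"
      then have "c1 \<tau> \<noteq> 0 \<or> c2 \<tau> \<noteq> 0" by auto
      then show "\<tau> \<in> faces_card \<Delta> 1" using c1(1) c2(1) unfolding is_chain_def by blast
    next
      fix \<tau> show "inS n (c1 \<tau> + c2 \<tau>)" using c1(1) c2(1) unfolding is_chain_def by (blast intro: inS_add)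
    qed
    moreover have "x + y = (\<Sum>\<tau>\<in>faces_card \<Delta> 1. xmon (face_label lab \<tau>) * (c1 \<tau> + c2 \<tau>))"
      using c1(2) c2(2) by (simp add: distrib_left sum.distrib)
    ultimately show ?thesis unfolding R_def by (intro CollectI exI[of _ "\<lambda>\<tau>. c1 \<tau> + c2 \<tau>"]) simp
  qed
  have Rsm: "s * x \<in> R" if sx: "inS n s" "x \<in> R" for s x
  proof -
    obtain c1 where c1: "is_chain \<Delta> n 1 c1" "x = (\<Sum>\<tau>\<in>faces_card \<Delta> 1. xmon (face_label lab \<tau>) * c1 \<tau>)"
      using sx(2) unfolding R_def by blast
    have "is_chain \<Delta> n 1 (\<lambda>\<tau>. s * c1 \<tau>)" unfolding is_chain_def
    proof (intro conjI allI impI)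
      fix \<tau> assume "s * c1 \<tau> \<noteq> 0"
      then have "c1 \<tau> \<noteq> 0" by auto
      then show "\<tau> \<in> faces_card \<Delta> 1" using c1(1) unfolding is_chain_def by blast
    next
      fix \<tau> show "inS n (s * c1 \<tau>)" using c1(1) sx(1) unfolding is_chain_def by (blast intro: inS_mult)
    qed
    moreover have "s * x = (\<Sum>\<tau>\<in>faces_card \<Delta> 1. xmon (face_label lab \<tau>) * (s * c1 \<tau>))"
      using c1(2) by (simp add: sum_distrib_left ac_simps)
    ultimately show ?thesis unfolding R_def by (intro CollectI exI[of _ "\<lambda>\<tau>. s * c1 \<tau>"]) simp
  qed
  have Rgen: "xmon (m a + m b) \<in> R" if ab: "a \<in> {1..q}" "b \<in> {1..q}" for a b
  proof -
    obtain u where u: "{u} \<in> \<Delta>" "mdvd (lab u) (m a + m b)" using V2 ab by blast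
    define d where "d = m a + m b - lab u"
    have "mon_in n (m a + m b)" using V3 ab by (simp add: mon_in_add)
    moreover have "kys d \<subseteq> kys (m a + m b)"
    proof
      fix i assume "i \<in> kys d"
      then have "lk (m a + m b) i - lk (lab u) i \<noteq> 0" unfolding d_def by (simp add: in_keys_iff lookup_minus)
      then have "lk (m a + m b) i \<noteq> 0" by auto
      then show "i \<in> kys (m a + m b)" by (simp add: in_keys_iff)
    qed
    ultimately have dn: "mon_in n d" unfolding mon_in_def by blast
    define c where "c \<tau> = (if \<tau> = {u} then xmon d else (0 :: 'k pol))" for \<tau>
    have uF: "{u} \<in> faces_card \<Delta> 1" using u by (simp add: faces_card_def)
    have "is_chain \<Delta> n 1 c" unfolding is_chain_def c_def using uF dn by (auto intro: inS_xmon)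
    moreover have "(\<Sum>\<tau>\<in>faces_card \<Delta> 1. xmon (face_label lab \<tau>) * c \<tau>) = xmon (m a + m b)"
    proof -
      have "(\<Sum>\<tau>\<in>faces_card \<Delta> 1. xmon (face_label lab \<tau>) * c \<tau>) = (\<Sum>\<tau>\<in>faces_card \<Delta> 1. if \<tau> = {u} then xmon (lab u) * xmon d else 0)"
        unfolding c_def by (rule sum.cong[OF refl]) auto
      also have "\<dots> = xmon (lab u) * xmon d" using finF uF by (simp add: sum.delta)
      also have "\<dots> = xmon (m a + m b)" unfolding xmon_mult d_def using mdvd_diff[OF u(2)] by simp
      finally show ?thesis .
    qed
    ultimately show ?thesis unfolding R_def by (auto intro!: exI[of _ c])
  qed
  have stepa: "xmon (m a) * y \<in> R" if a: "a \<in> {1..q}" and y: "y \<in> I" for a y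
  proof -
    have "I \<subseteq> {y. xmon (m a) * y \<in> R}"
      unfolding I_def
    proof (rule span_least)
      show "0 \<in> {y. xmon (m a) * y \<in> R}" using R0 by simp
      show "x + y \<in> {y. xmon (m a) * y \<in> R}" if "x \<in> {y. xmon (m a) * y \<in> R}" "y \<in> {y. xmon (m a) * y \<in> R}" for x y
        using that Radd by (simp add: distrib_left)
      show "s * x \<in> {y. xmon (m a) * y \<in> R}" if "inS n s" "x \<in> {y. xmon (m a) * y \<in> R}" for s x
        using that Rsm[of s "xmon (m a) * x"] by (simp add: ac_simps)
      show "(\<lambda>i. xmon (m i)) ` {1..q} \<subseteq> {y. xmon (m a) * y \<in> R}"
        using Rgen a by (auto simp: xmon_mult)
    qed
    then show ?thesis using y by blast
  qed
  have stepb: "x * y \<in> R" if x: "x \<in> I" and y: "y \<in> I" for x y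
  proof -
    have "ideal_span n ((\<lambda>i. xmon (m i) :: 'k pol) ` {1..q}) \<subseteq> {x. \<forall>y\<in>I. x * y \<in> R}"
    proof (rule span_least)
      show "0 \<in> {x. \<forall>y\<in>I. x * y \<in> R}" using R0 by simp
      show "x + y \<in> {x. \<forall>y\<in>I. x * y \<in> R}" if "x \<in> {x. \<forall>y\<in>I. x * y \<in> R}" "y \<in> {x. \<forall>y\<in>I. x * y \<in> R}" for x y
        using that Radd by (simp add: distrib_right)
      show "s * x \<in> {x. \<forall>y\<in>I. x * y \<in> R}" if "inS n s" "x \<in> {x. \<forall>y\<in>I. x * y \<in> R}" for s x
        using that Rsm by (simp add: mult.assoc)
      show "(\<lambda>i. xmon (m i)) ` {1..q} \<subseteq> {x. \<forall>y\<in>I. x * y \<in> R}"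
        using stepa by auto
    qed
    then have "I \<subseteq> {x. \<forall>y\<in>I. x * y \<in> R}" using I_def by simp
    then show ?thesis using x y by blast
  qed
  have sub2: "ideal_prod n I I \<subseteq> R"
    unfolding ideal_prod_def
    by (rule span_least[OF R0 Radd Rsm]) (use stepb in blast)+
  show ?thesis using LR sub1 sub2 by blast
qed


definition DX :: "nat \<Rightarrow> (nat \<times> nat) set \<Rightarrow> (nat \<times> nat) set set" where
  "DX q X = {\<tau>. (\<exists>i\<in>{1..q}. \<tau> \<subseteq> Mfacet q i) \<and> \<tau> \<inter> X = {}}"

lemma Mq2_DX: "Mq2 q = DX q {}" by (simp add: Mq2_def DX_def)
lemma M2I_DX: "M2I q m = DX q (deleted q m)" by (auto simp: M2I_def Mq2_def DX_def)

lemma Mset_eq: "Mset q = {(a,b). 1 \<le> a \<and> a < b \<and> b \<le> q}"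
proof
  show "Mset q \<subseteq> {(a,b). 1 \<le> a \<and> a < b \<and> b \<le> q}"
    unfolding Mset_def lv_def by auto
  show "{(a,b). 1 \<le> a \<and> a < b \<and> b \<le> q} \<subseteq> Mset q"
  proof
    fix x assume "x \<in> {(a,b). 1 \<le> a \<and> a < b \<and> b \<le> q}"
    then obtain a b where x: "x = (a,b)" "1 \<le> a" "a < b" "b \<le> q" by blast
    then have "x = lv a b" by (simp add: lv_def)
    then show "x \<in> Mset q" unfolding Mset_def using x by blast
  qed
qed

lemma Mfacet_eq: "Mfacet q i = Mset q \<union> {(i,i)}"
  by (simp add: Mfacet_def lv_def)

lemma Mlab_pair[simp]: "Mlab m (a,b) = m a + m b" by (simp add: Mlab_def)

lemma DX_sub: "\<tau> \<in> DX q X \<Longrightarrow> \<tau> \<subseteq> {1..q} \<times> {1..q}"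
  unfolding DX_def Mfacet_eq Mset_eq by auto

lemma DX_finite: "\<tau> \<in> DX q X \<Longrightarrow> finite \<tau>"
  using DX_sub finite_subset by (metis finite_SigmaI finite_atLeastAtMost)

lemma DX_apex:
  assumes KP: "\<forall>i\<in>{1..q}. \<forall>j\<in>{1..q}. \<forall>g. i \<noteq> j \<longrightarrow> mdvd (m i + m i) g \<longrightarrow> mdvd (m j + m j) g \<longrightarrow> (\<exists>u\<in>Mset q - X. mdvd (Mlab m u) g)"
  shows "\<forall>g \<tau>. \<tau> \<in> DX q X \<longrightarrow> \<tau> \<noteq> {} \<longrightarrow> mdvd (face_label (Mlab m) \<tau>) g \<longrightarrow>
        (\<exists>a. \<forall>\<tau>'\<in>DX q X. mdvd (face_label (Mlab m) \<tau>') g \<longrightarrow> insert a \<tau>' \<in> DX q X \<and> mdvd (face_label (Mlab m) (insert a \<tau>')) g)"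
proof (intro allI impI)
  fix g \<tau> assume t: "\<tau> \<in> DX q X" "\<tau> \<noteq> {}" "mdvd (face_label (Mlab m) \<tau>) g"
  have fdv: "mdvd (face_label (Mlab m) \<sigma>) g \<longleftrightarrow> (\<forall>v\<in>\<sigma>. mdvd (Mlab m v) g)" if "\<sigma> \<in> DX q X" for \<sigma>
    using DX_finite[OF that] by (rule face_dvd_iff)
  show "\<exists>a. \<forall>\<tau>'\<in>DX q X. mdvd (face_label (Mlab m) \<tau>') g \<longrightarrow> insert a \<tau>' \<in> DX q X \<and> mdvd (face_label (Mlab m) (insert a \<tau>')) g"
  proof (cases "\<exists>u\<in>Mset q - X. mdvd (Mlab m u) g")
    case True
    then obtain u where u: "u \<in> Mset q" "u \<notin> X" "mdvd (Mlab m u) g" by blast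
    show ?thesis
    proof (rule exI[of _ u], intro ballI impI)
      fix \<tau>' assume t': "\<tau>' \<in> DX q X" "mdvd (face_label (Mlab m) \<tau>') g"
      then obtain i where i: "i \<in> {1..q}" "\<tau>' \<subseteq> Mfacet q i" "\<tau>' \<inter> X = {}" unfolding DX_def by blast
      have "insert u \<tau>' \<subseteq> Mfacet q i" using i u unfolding Mfacet_def by blast
      moreover have "insert u \<tau>' \<inter> X = {}" using i u by blast
      ultimately have ins: "insert u \<tau>' \<in> DX q X" unfolding DX_def using i by blast
      have "\<forall>v\<in>insert u \<tau>'. mdvd (Mlab m v) g" using fdv[OF t'(1)] t'(2) u by blast
      then show "insert u \<tau>' \<in> DX q X \<and> mdvd (face_label (Mlab m) (insert u \<tau>')) g"
        using ins fdv[OF ins] by blast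
    qed
  next
    case False
    obtain w where w: "w \<in> \<tau>" using t(2) by blast
    obtain i where i: "i \<in> {1..q}" "\<tau> \<subseteq> Mfacet q i" "\<tau> \<inter> X = {}" using t(1) unfolding DX_def by blast
    have wg: "mdvd (Mlab m w) g" using fdv[OF t(1)] t(3) w by blast
    have wX: "w \<notin> X" using i w by blast
    then have "w \<notin> Mset q" using False wg by blast
    then have wi: "w = (i,i)" using i w unfolding Mfacet_eq by blast
    show ?thesis
    proof (rule exI[of _ w], intro ballI impI)
      fix \<tau>' assume t': "\<tau>' \<in> DX q X" "mdvd (face_label (Mlab m) \<tau>') g"
      then obtain i' where i': "i' \<in> {1..q}" "\<tau>' \<subseteq> Mfacet q i'" "\<tau>' \<inter> X = {}" unfolding DX_def by blast
      have "v = w" if v: "v \<in> \<tau>'" for v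
      proof -
        have vg: "mdvd (Mlab m v) g" using fdv[OF t'(1)] t'(2) v by blast
        have "v \<notin> X" using i' v by blast
        then have "v \<notin> Mset q" using False vg by blast
        then have vi: "v = (i',i')" using i' v unfolding Mfacet_eq by blast
        show "v = w"
        proof (rule ccontr)
          assume "v \<noteq> w"
          then have "i \<noteq> i'" using vi wi by blast
          moreover have "mdvd (m i + m i) g" using wg wi by simp
          moreover have "mdvd (m i' + m i') g" using vg vi by simp
          ultimately show False using KP i(1) i'(1) False by blast
        qed
      qed
      then have e: "insert w \<tau>' = {w}" by blast
      have "{w} \<in> DX q X" unfolding DX_def using i w wX by blast
      then show "insert w \<tau>' \<in> DX q X \<and> mdvd (face_label (Mlab m) (insert w \<tau>')) g"
        unfolding e using wg by simp
    qed
  qed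
qed

lemma DX_resolution:
  fixes m :: "nat \<Rightarrow> mon"
  assumes vars: "\<forall>i\<in>{1..q}. mon_in n (m i)"
    and KP: "\<forall>i\<in>{1..q}. \<forall>j\<in>{1..q}. \<forall>g. i \<noteq> j \<longrightarrow> mdvd (m i + m i) g \<longrightarrow> mdvd (m j + m j) g \<longrightarrow> (\<exists>u\<in>Mset q - X. mdvd (Mlab m u) g)"
    and GP: "\<forall>a\<in>{1..q}. \<forall>b\<in>{1..q}. \<exists>u. u \<in> Mset q \<union> {(i,i) | i. i \<in> {1..q}} \<and> u \<notin> X \<and> mdvd (Mlab m u) (m a + m b)"
    and I_def: "I = ideal_span n ((\<lambda>i. xmon (m i) :: 'k::field pol) ` {1..q})"
  shows "supports_free_resolution n (DX q X) (Mlab m) (ideal_prod n I I)"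
proof -
  let ?V = "{1..q} \<times> {1..q}"
  have finV: "finite ?V" by simp
  have sub: "\<forall>\<tau>\<in>DX q X. \<tau> \<subseteq> ?V" using DX_sub by blast
  have labn: "\<forall>v\<in>?V. mon_in n (Mlab m v)" using vars by (auto intro: mon_in_add)
  note apex = DX_apex[OF KP]
  have finD: "finite (DX q X)"
  proof -
    have "DX q X \<subseteq> Pow ?V" using sub by blast
    then show ?thesis using finV by (simp add: finite_subset)
  qed
  have V1: "\<forall>\<tau>\<in>faces_card (DX q X) 1. \<exists>a\<in>{1..q}. \<exists>b\<in>{1..q}. face_label (Mlab m) \<tau> = m a + m b"
  proof
    fix \<tau> assume t: "\<tau> \<in> faces_card (DX q X) 1"
    then have "card \<tau> = 1" by (simp add: faces_card_def)
    then obtain u where u: "\<tau> = {u}" by (rule card_1_singletonE)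
    have "u \<in> ?V" using t u sub by (auto simp: faces_card_def)
    then obtain a b where ab: "u = (a,b)" "a \<in> {1..q}" "b \<in> {1..q}" by blast
    then have "face_label (Mlab m) \<tau> = m a + m b" using u by simp
    then show "\<exists>a\<in>{1..q}. \<exists>b\<in>{1..q}. face_label (Mlab m) \<tau> = m a + m b" using ab by blast
  qed
  have V2: "\<forall>a\<in>{1..q}. \<forall>b\<in>{1..q}. \<exists>u. {u} \<in> DX q X \<and> mdvd (Mlab m u) (m a + m b)"
  proof (intro ballI)
    fix a b assume ab: "a \<in> {1..q}" "b \<in> {1..q}"
    then obtain u where u: "u \<in> Mset q \<union> {(i,i) | i. i \<in> {1..q}}" "u \<notin> X" "mdvd (Mlab m u) (m a + m b)"
      using GP by blast
    have "{u} \<in> DX q X"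
    proof (cases "u \<in> Mset q")
      case True
      then have "{u} \<subseteq> Mfacet q a" by (simp add: Mfacet_def)
      then show ?thesis unfolding DX_def using ab u(2) by blast
    next
      case False
      then obtain i where "u = (i,i)" "i \<in> {1..q}" using u(1) by blast
      then have "{u} \<subseteq> Mfacet q i" by (simp add: Mfacet_eq)
      then show ?thesis unfolding DX_def using \<open>i \<in> {1..q}\<close> u(2) by blast
    qed
    then show "\<exists>u. {u} \<in> DX q X \<and> mdvd (Mlab m u) (m a + m b)" using u(3) by blast
  qed
  show ?thesis
    unfolding supports_free_resolution_def
  proof (intro conjI allI impI)
    fix k :: nat and c :: "(nat \<times> nat) set \<Rightarrow> 'k pol"
    assume "k \<ge> 1" "is_chain (DX q X) n k c \<and> hbd (DX q X) (Mlab m) k c = (\<lambda>_. 0)"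
    then show "\<exists>e. is_chain (DX q X) n (Suc k) e \<and> hbd (DX q X) (Mlab m) (Suc k) e = c"
      using exact_generic[OF finV sub labn apex] by blast
  next
    show "{hbd (DX q X) (Mlab m) 1 c {} |c. is_chain (DX q X) n 1 c} = ideal_prod n I I"
      by (rule image_generic[OF finD V1 V2 vars I_def])
  qed
qed


lemma mdvd_mix: "mdvd (a + a) g \<Longrightarrow> mdvd (b + b) g \<Longrightarrow> mdvd (a + b) g"
  unfolding mdvd_def lookup_add
proof
  fix i assume "\<forall>i. lk a i + lk a i \<le> lk g i" "\<forall>i. lk b i + lk b i \<le> lk g i"
  then have "lk a i + lk a i \<le> lk g i" "lk b i + lk b i \<le> lk g i" by blast+
  then show "lk a i + lk b i \<le> lk g i" by linarith
qed

lemma mdvd_half1: "mdvd (a + a) (a + b) \<Longrightarrow> mdvd a b"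
  unfolding mdvd_def lookup_add
proof
  fix i assume "\<forall>i. lk a i + lk a i \<le> lk a i + lk b i"
  then have "lk a i + lk a i \<le> lk a i + lk b i" by blast
  then show "lk a i \<le> lk b i" by linarith
qed

lemma mdvd_half2: "mdvd (b + b) (a + b) \<Longrightarrow> mdvd b a"
  unfolding mdvd_def lookup_add
proof
  fix i assume "\<forall>i. lk b i + lk b i \<le> lk a i + lk b i"
  then have "lk b i + lk b i \<le> lk a i + lk b i" by blast
  then show "lk b i \<le> lk a i" by linarith
qed

lemma pair_lab: "Mlab m (min a b, max a b) = m a + m b"
  by (cases "a \<le> b") (simp_all add: min_def max_def add.commute)

lemma KP_empty:
  "\<forall>i\<in>{1..q}. \<forall>j\<in>{1..q}. \<forall>g. i \<noteq> j \<longrightarrow> mdvd (m i + m i) g \<longrightarrow> mdvd (m j + m j) g \<longrightarrow> (\<exists>u\<in>Mset q - {}. mdvd (Mlab m u) g)"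
proof (intro ballI allI impI)
  fix i j g assume ij: "i \<in> {1..q}" "j \<in> {1..q}" "i \<noteq> j" and g: "mdvd (m i + m i) g" "mdvd (m j + m j) g"
  have "(min i j, max i j) \<in> Mset q" unfolding Mset_eq using ij by auto
  moreover have "mdvd (Mlab m (min i j, max i j)) g" unfolding pair_lab using g by (rule mdvd_mix)
  ultimately show "\<exists>u\<in>Mset q - {}. mdvd (Mlab m u) g" by blast
qed

lemma GP_any:
  assumes "\<forall>w\<in>{(a,b). 1 \<le> a \<and> a \<le> b \<and> b \<le> q}. \<exists>w'\<in>{(a,b). 1 \<le> a \<and> a \<le> b \<and> b \<le> q}. w' \<notin> X \<and> mdvd (Mlab m w') (Mlab m w)"
  shows "\<forall>a\<in>{1..q}. \<forall>b\<in>{1..q}. \<exists>u. u \<in> Mset q \<union> {(i,i) | i. i \<in> {1..q}} \<and> u \<notin> X \<and> mdvd (Mlab m u) (m a + m b)"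
proof (intro ballI)
  fix a b assume ab: "a \<in> {1..q}" "b \<in> {1..q}"
  then have "(min a b, max a b) \<in> {(a,b). 1 \<le> a \<and> a \<le> b \<and> b \<le> q}" by auto
  then obtain w' where w': "w' \<in> {(a,b). 1 \<le> a \<and> a \<le> b \<and> b \<le> q}" "w' \<notin> X" "mdvd (Mlab m w') (Mlab m (min a b, max a b))"
    using assms by blast
  note w' = w'(1,2) w'(3)[unfolded pair_lab]
  have "w' \<in> Mset q \<union> {(i,i) | i. i \<in> {1..q}}"
  proof -
    obtain c d where cd: "w' = (c,d)" "1 \<le> c" "c \<le> d" "d \<le> q" using w'(1) by blast
    show ?thesis
    proof (cases "c = d")
      case True then show ?thesis using cd by auto
    next
      case False then show ?thesis using cd unfolding Mset_eq by auto
    qed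
  qed
  then show "\<exists>u. u \<in> Mset q \<union> {(i,i) | i. i \<in> {1..q}} \<and> u \<notin> X \<and> mdvd (Mlab m u) (m a + m b)"
    using w' by blast
qed

lemma GP_empty: "\<forall>a\<in>{1..q}. \<forall>b\<in>{1..q}. \<exists>u. u \<in> Mset q \<union> {(i,i) | i. i \<in> {1..q}} \<and> u \<notin> {} \<and> mdvd (Mlab m u) (m a + m b)"
proof (rule GP_any, intro ballI)
  fix w assume "w \<in> {(a,b). 1 \<le> a \<and> a \<le> b \<and> b \<le> q}"
  moreover have "mdvd (Mlab m w) (Mlab m w)" by simp
  ultimately show "\<exists>w'\<in>{(a,b). 1 \<le> a \<and> a \<le> b \<and> b \<le> q}. w' \<notin> {} \<and> mdvd (Mlab m w') (Mlab m w)" by blast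
qed

definition degn :: "nat \<Rightarrow> mon \<Rightarrow> nat" where "degn n a = (\<Sum>i<n. lk a i)"

lemma degn_add: "degn n (a + b) = degn n a + degn n b"
  by (simp add: degn_def lookup_add sum.distrib)

lemma degn_mono: "mdvd a b \<Longrightarrow> degn n a \<le> degn n b"
  unfolding degn_def mdvd_def by (intro sum_mono) blast

lemma degn_strict:
  assumes "mdvd a b" "a \<noteq> b" "mon_in n b"
  shows "degn n a < degn n b"
proof -
  have "\<exists>i. lk a i \<noteq> lk b i"
  proof (rule ccontr)
    assume "\<not> (\<exists>i. lk a i \<noteq> lk b i)"
    then have "a = b" by (intro poly_mapping_eqI) simp
    then show False using assms(2) by simp
  qed
  then obtain i where i: "lk a i \<noteq> lk b i" by blast
  have "lk a i \<le> lk b i" using assms(1) unfolding mdvd_def by simp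
  then have lt: "lk a i < lk b i" using i by simp
  then have "i \<in> kys b" by (simp add: in_keys_iff)
  then have "i < n" using assms(3) unfolding mon_in_def by blast
  then show ?thesis unfolding degn_def
    using assms(1) lt unfolding mdvd_def by (intro sum_strict_mono_ex1) auto
qed

lemma degn_eq: "mdvd a b \<Longrightarrow> degn n a = degn n b \<Longrightarrow> mon_in n b \<Longrightarrow> a = b"
proof (rule ccontr)
  assume "mdvd a b" "degn n a = degn n b" "mon_in n b" "a \<noteq> b"
  then have "degn n a < degn n b" by (intro degn_strict)
  then show False using \<open>degn n a = degn n b\<close> by simp
qed

lemma arith_lt: "(D1::nat) < D \<Longrightarrow> r \<le> q \<Longrightarrow> D1 * (q + 1) + r < D * (q + 1) + s"
proof -
  assume a: "D1 < D" "r \<le> q"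
  then have "(D1 + 1) * (q + 1) \<le> D * (q + 1)" by (intro mult_le_mono1) simp
  then show ?thesis using a by (simp add: algebra_simps)
qed

lemma arith_le: "(A::nat) * (q + 1) + r \<le> B * (q + 1) + s \<Longrightarrow> s \<le> q \<Longrightarrow> A \<le> B"
  using arith_lt[of B A s q r] by linarith

lemma del_cases:
  assumes minimal: "\<forall>i\<in>{1..q}. \<forall>j\<in>{1..q}. i \<noteq> j \<longrightarrow> \<not> mdvd (m i) (m j)"
    and w: "w \<in> deleted q m"
  shows "(\<exists>u v. u \<in> {1..q} \<and> v \<in> {1..q} \<and> mdvd (m u + m v) (Mlab m w) \<and> m u + m v \<noteq> Mlab m w)
       \<or> (\<exists>u v. u \<in> {1..q} \<and> v \<in> {1..q} \<and> m u + m v = Mlab m w \<and> fst w < min u v)"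
proof -
  have inj: "i = j" if "i \<in> {1..q}" "j \<in> {1..q}" "m i = m j" for i j
    using minimal that by fastforce
  show ?thesis
  proof (cases "w \<in> {lv i j | i j u v. i \<in> {1..q} \<and> j \<in> {1..q} \<and> u \<in> {1..q} \<and> v \<in> {1..q} \<and> {i,j} \<noteq> {u,v}
        \<and> mdvd (m i + m j) (m u + m v) \<and> m i + m j = m u + m v \<and> i = Min {i,j,u,v}}")
    case True
    then obtain i j u v where h: "w = lv i j" "i \<in> {1..q}" "j \<in> {1..q}" "u \<in> {1..q}" "v \<in> {1..q}" "{i,j} \<noteq> {u,v}"
      "m i + m j = m u + m v" "i = Min {i,j,u,v}" by blast
    have le: "i \<le> j" "i \<le> u" "i \<le> v" using h(8) by (metis Min_le finite.emptyI finite.insertI insertCI)+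
    have w2: "w = (i, j)" using h(1) le by (simp add: lv_def)
    have "i \<noteq> u"
    proof
      assume "i = u"
      then have "m j = m v" using h(7) by simp
      then have "j = v" using inj h(3,5) by blast
      then show False using h(6) \<open>i = u\<close> by simp
    qed
    moreover have "i \<noteq> v"
    proof
      assume "i = v"
      then have "m j = m u" using h(7) by (simp add: add.commute)
      then have "j = u" using inj h(3,4) by blast
      then show False using h(6) \<open>i = v\<close> by auto
    qed
    ultimately have "fst w < min u v" using w2 le by simp
    moreover have "m u + m v = Mlab m w" using w2 h(7) by simp
    ultimately show ?thesis using h(4,5) by blast
  next
    case False
    then have "w \<in> {lv u v | i j u v. i \<in> {1..q} \<and> j \<in> {1..q} \<and> u \<in> {1..q} \<and> v \<in> {1..q} \<and> {i,j} \<noteq> {u,v}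
        \<and> mdvd (m i + m j) (m u + m v) \<and> m i + m j \<noteq> m u + m v}" using w unfolding deleted_def by blast
    then obtain i j u v where h: "w = lv u v" "i \<in> {1..q}" "j \<in> {1..q}"
      "mdvd (m i + m j) (m u + m v)" "m i + m j \<noteq> m u + m v" by blast
    have "Mlab m w = m u + m v" using h(1) unfolding lv_def by (rule ssubst) (rule pair_lab)
    then show ?thesis using h by auto
  qed
qed

definition PP :: "nat \<Rightarrow> (nat \<times> nat) set" where "PP q = {(a,b). 1 \<le> a \<and> a \<le> b \<and> b \<le> q}"

lemma PP_mon:
  assumes "w \<in> PP q" "\<forall>i\<in>{1..q}. mon_in n (m i)" shows "mon_in n (Mlab m w)"
proof -
  obtain x y where "w = (x,y)" "x \<in> {1..q}" "y \<in> {1..q}" using assms(1) unfolding PP_def by auto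
  then show ?thesis using assms(2) mon_in_add by simp
qed

lemma dominate:
  assumes vars: "\<forall>i\<in>{1..q}. mon_in n (m i)"
    and minimal: "\<forall>i\<in>{1..q}. \<forall>j\<in>{1..q}. i \<noteq> j \<longrightarrow> \<not> mdvd (m i) (m j)"
  shows "w \<in> PP q \<Longrightarrow> \<exists>w'. w' \<in> PP q \<and> w' \<notin> deleted q m \<and> mdvd (Mlab m w') (Mlab m w) \<and> (Mlab m w' = Mlab m w \<longrightarrow> fst w \<le> fst w')"
proof (induction "degn n (Mlab m w) * (q + 1) + (q - fst w)" arbitrary: w rule: less_induct)
  case less
  have wmon: "mon_in n (Mlab m w)" using less.prems vars by (rule PP_mon)
  show ?case
  proof (cases "w \<in> deleted q m")
    case False
    have "mdvd (Mlab m w) (Mlab m w)" by simp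
    then show ?thesis using less.prems False by (intro exI[of _ w]) simp
  next
    case True
    from del_cases[OF minimal True] show ?thesis
    proof
      assume "\<exists>u v. u \<in> {1..q} \<and> v \<in> {1..q} \<and> mdvd (m u + m v) (Mlab m w) \<and> m u + m v \<noteq> Mlab m w"
      then obtain u v where uv: "u \<in> {1..q}" "v \<in> {1..q}" "mdvd (m u + m v) (Mlab m w)" "m u + m v \<noteq> Mlab m w" by blast
      let ?w1 = "(min u v, max u v)"
      have w1P: "?w1 \<in> PP q" using uv unfolding PP_def by auto
      have l1: "Mlab m ?w1 = m u + m v" by (rule pair_lab)
      have "degn n (Mlab m ?w1) < degn n (Mlab m w)"
        unfolding l1 using uv wmon by (intro degn_strict)
      moreover have "q - fst ?w1 \<le> q" by simp
      ultimately have "degn n (Mlab m ?w1) * (q + 1) + (q - fst ?w1) < degn n (Mlab m w) * (q + 1) + (q - fst w)"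
        by (intro arith_lt)
      from less.hyps[OF this w1P] obtain w' where w': "w' \<in> PP q" "w' \<notin> deleted q m" "mdvd (Mlab m w') (Mlab m ?w1)"
        by blast
      have d: "mdvd (Mlab m w') (Mlab m w)" using w'(3) uv(3) l1 mdvd_trans by metis
      have "Mlab m w' \<noteq> Mlab m w"
      proof
        assume "Mlab m w' = Mlab m w"
        then have "mdvd (Mlab m w) (m u + m v)" using w'(3) l1 by simp
        then have "m u + m v = Mlab m w" using uv(3) mdvd_antisym by blast
        then show False using uv(4) by simp
      qed
      then show ?thesis using w' d by blast
    next
      assume "\<exists>u v. u \<in> {1..q} \<and> v \<in> {1..q} \<and> m u + m v = Mlab m w \<and> fst w < min u v"
      then obtain u v where uv: "u \<in> {1..q}" "v \<in> {1..q}" "m u + m v = Mlab m w" "fst w < min u v" by blast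
      let ?w1 = "(min u v, max u v)"
      have w1P: "?w1 \<in> PP q" using uv unfolding PP_def by auto
      have l1: "Mlab m ?w1 = Mlab m w" using uv(3) pair_lab by metis
      have "min u v \<le> q" using uv by auto
      then have lt: "q - fst ?w1 < q - fst w" using uv(4) by (simp add: min_def split: if_splits)
      have "degn n (Mlab m ?w1) * (q + 1) + (q - fst ?w1) < degn n (Mlab m w) * (q + 1) + (q - fst w)"
        unfolding l1 by (rule add_strict_left_mono[OF lt])
      from less.hyps[OF this w1P] obtain w' where w': "w' \<in> PP q" "w' \<notin> deleted q m" "mdvd (Mlab m w') (Mlab m ?w1)"
        "Mlab m w' = Mlab m ?w1 \<longrightarrow> fst ?w1 \<le> fst w'" by blast
      have e4: "Mlab m w' = Mlab m w \<longrightarrow> fst w \<le> fst w'" using w'(4) l1 uv(4) by auto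
      have e3: "mdvd (Mlab m w') (Mlab m w)" using w'(3) l1 by simp
      show ?thesis by (rule exI[of _ w']) (use w'(1,2) e3 e4 in blast)
    qed
  qed
qed


lemma KP_del:
  assumes vars: "\<forall>i\<in>{1..q}. mon_in n (m i)"
    and minimal: "\<forall>i\<in>{1..q}. \<forall>j\<in>{1..q}. i \<noteq> j \<longrightarrow> \<not> mdvd (m i) (m j)"
  shows "\<forall>i\<in>{1..q}. \<forall>j\<in>{1..q}. \<forall>g. i \<noteq> j \<longrightarrow> mdvd (m i + m i) g \<longrightarrow> mdvd (m j + m j) g \<longrightarrow> (\<exists>u\<in>Mset q - deleted q m. mdvd (Mlab m u) g)"
proof (intro ballI allI impI)
  fix i j g assume ij: "i \<in> {1..q}" "j \<in> {1..q}" "i \<noteq> j" and gi: "mdvd (m i + m i) g" and gj: "mdvd (m j + m j) g"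
  show "\<exists>u\<in>Mset q - deleted q m. mdvd (Mlab m u) g"
  proof (rule ccontr)
    assume H: "\<not> (\<exists>u\<in>Mset q - deleted q m. mdvd (Mlab m u) g)"
    define Q where "Q = {p \<in> {1..q} \<times> {1..q}. fst p < snd p \<and> mdvd (m (fst p) + m (fst p)) g \<and> mdvd (m (snd p) + m (snd p)) g}"
    define f where "f p = degn n (Mlab m p) * (q + 1) + (q - fst p)" for p
    have finQ: "finite Q" unfolding Q_def by simp
    have inQ: "(min a b, max a b) \<in> Q" if "a \<in> {1..q}" "b \<in> {1..q}" "a \<noteq> b" "mdvd (m a + m a) g" "mdvd (m b + m b) g" for a b
      using that unfolding Q_def by (cases "a < b") (auto simp: min_def max_def)
    have fpair: "f (min a b, max a b) = degn n (m a + m b) * (q + 1) + (q - min a b)" for a b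
      unfolding f_def pair_lab by simp
    have p0: "(min i j, max i j) \<in> Q" using inQ[OF ij gi gj] .
    have "Min (f ` Q) \<in> f ` Q" using finQ p0 by (intro Min_in) auto
    then obtain p where p: "p \<in> Q" "f p = Min (f ` Q)" by auto
    have pmin: "f p \<le> f p'" if "p' \<in> Q" for p'
      using p(2) finQ that by (simp add: Min_le)
    obtain x y where xy: "p = (x,y)" by (cases p)
    have xyQ: "x \<in> {1..q}" "y \<in> {1..q}" "x < y" "mdvd (m x + m x) g" "mdvd (m y + m y) g"
      using p(1) xy unfolding Q_def by auto
    have "(x,y) \<in> PP q" using xyQ unfolding PP_def by auto
    from dominate[OF vars minimal this] obtain w' where w0: "w' \<in> PP q" "w' \<notin> deleted q m"
      "mdvd (Mlab m w') (Mlab m (x,y))" "Mlab m w' = Mlab m (x,y) \<longrightarrow> fst (x,y) \<le> fst w'" by blast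
    note w' = w0(1,2) w0(3,4)[unfolded Mlab_pair fst_conv]
    have mxy: "mdvd (m x + m y) g" using xyQ(4,5) by (rule mdvd_mix)
    have w'g: "mdvd (Mlab m w') g" using w'(3) mxy by (rule mdvd_trans)
    have "w' \<notin> Mset q" using H w'(2) w'g by blast
    moreover obtain c d where cd: "w' = (c,d)" "1 \<le> c" "c \<le> d" "d \<le> q" using w'(1) unfolding PP_def by auto
    ultimately have "\<not> c < d" unfolding Mset_eq by auto
    then have "c = d" using cd by simp
    then have k: "w' = (c,c)" "c \<in> {1..q}" using cd by auto
    define k where "k = c"
    note k = k[folded k_def]
    have lk: "mdvd (m k + m k) (m x + m y)" using w'(3) k by simp
    have kx: "k \<noteq> x"
    proof
      assume "k = x"
      then have "mdvd (m x + m x) (m x + m y)" using lk by simp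
      then have "mdvd (m x) (m y)" by (rule mdvd_half1)
      moreover have "x \<noteq> y" using xyQ(3) by simp
      ultimately show False using minimal xyQ(1,2) by blast
    qed
    have ky: "k \<noteq> y"
    proof
      assume "k = y"
      then have "mdvd (m y + m y) (m x + m y)" using lk by simp
      then have "mdvd (m y) (m x)" by (rule mdvd_half2)
      moreover have "y \<noteq> x" using xyQ(3) by simp
      ultimately show False using minimal xyQ(1,2) by blast
    qed
    have gk: "mdvd (m k + m k) g" using lk mxy by (rule mdvd_trans)
    have "x \<noteq> k" using kx by simp
    then have p1: "(min x k, max x k) \<in> Q" using inQ[OF xyQ(1) k(2) _ xyQ(4) gk] by blast
    have "y \<noteq> k" using ky by simp
    then have p2: "(min y k, max y k) \<in> Q" using inQ[OF xyQ(2) k(2) _ xyQ(5) gk] by blast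
    have fp: "f p = degn n (m x + m y) * (q + 1) + (q - x)" unfolding xy f_def by simp
    have "degn n (m x + m y) \<le> degn n (m x + m k)"
      using pmin[OF p1] unfolding fp fpair by (rule arith_le) simp
    then have dyk: "degn n (m y) \<le> degn n (m k)" by (simp add: degn_add)
    have "degn n (m x + m y) \<le> degn n (m y + m k)"
      using pmin[OF p2] unfolding fp fpair by (rule arith_le) simp
    then have dxk: "degn n (m x) \<le> degn n (m k)" by (simp add: degn_add)
    have "degn n (m k + m k) \<le> degn n (m x + m y)" using lk by (rule degn_mono)
    then have dk: "degn n (m k) + degn n (m k) \<le> degn n (m x) + degn n (m y)" by (simp add: degn_add)
    have "degn n (m k + m k) = degn n (m x + m y)" using dyk dxk dk by (simp add: degn_add)
    moreover have "mon_in n (m x + m y)" using vars xyQ by (simp add: mon_in_add)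
    ultimately have "m k + m k = m x + m y" by (rule degn_eq[OF lk])
    then have "x \<le> k" using w'(4) k by simp
    then have xk: "x < k" using kx by simp
    have "min y k \<le> q" using xyQ k by auto
    moreover have "x < min y k" using xk xyQ(3) by simp
    ultimately have lt: "q - min y k < q - x" by linarith
    have deq: "degn n (m y + m k) = degn n (m x + m y)" using dyk dxk dk by (simp add: degn_add)
    have "f (min y k, max y k) < f p"
      unfolding fpair fp deq by (rule add_strict_left_mono[OF lt])
    then show False using pmin[OF p2] by simp
  qed
qed

theorem theorem1:
  fixes n q :: nat and m :: "nat \<Rightarrow> mon"
  assumes vars: "\<forall>i\<in>{1..q}. mon_in n (m i)"
      and minimal: "\<forall>i\<in>{1..q}. \<forall>j\<in>{1..q}. i \<noteq> j \<longrightarrow> \<not> mdvd (m i) (m j)"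
  defines "I \<equiv> ideal_span n ((\<lambda>i. xmon (m i) :: 'k::field pol) ` {1..q})"
  shows "supports_free_resolution n (Mq2 q) (Mlab m) (ideal_prod n I I)
       \<and> supports_free_resolution n (M2I q m) (Mlab m) (ideal_prod n I I)"
proof
  have Ie: "I = ideal_span n ((\<lambda>i. xmon (m i) :: 'k::field pol) ` {1..q})" by (simp add: I_def)
  show "supports_free_resolution n (Mq2 q) (Mlab m) (ideal_prod n I I)"
    unfolding Mq2_DX by (rule DX_resolution[OF vars KP_empty GP_empty Ie])
  have GP: "\<forall>a\<in>{1..q}. \<forall>b\<in>{1..q}. \<exists>u. u \<in> Mset q \<union> {(i,i) | i. i \<in> {1..q}} \<and> u \<notin> deleted q m \<and> mdvd (Mlab m u) (m a + m b)"
  proof (rule GP_any, intro ballI)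
    fix w assume "w \<in> {(a,b). 1 \<le> a \<and> a \<le> b \<and> b \<le> q}"
    then have "w \<in> PP q" by (simp add: PP_def)
    from dominate[OF vars minimal this] obtain w' where "w' \<in> PP q" "w' \<notin> deleted q m" "mdvd (Mlab m w') (Mlab m w)"
      by blast
    then show "\<exists>w'\<in>{(a,b). 1 \<le> a \<and> a \<le> b \<and> b \<le> q}. w' \<notin> deleted q m \<and> mdvd (Mlab m w') (Mlab m w)"
      unfolding PP_def by blast
  qed
  show "supports_free_resolution n (M2I q m) (Mlab m) (ideal_prod n I I)"
    unfolding M2I_DX by (rule DX_resolution[OF vars KP_del[OF vars minimal] GP Ie])
qed

end
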